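(* Let $(a_n)_{n\ge1}$ be a complex sequence with $a_1\ne0$ and $\sum_n|a_n|n^{\epsilon}<\infty$ for some $\epsilon>0$, and suppose its convolution inverse $(b_n)$ satisfies $\sum_n|b_n|/\sqrt n<\infty$. Then the operator $\mathcal F(a_n)=T(\overline{b_n})ST(a_n)$ is a unitary operator on $L^2[0,\infty)$.
   Context: For a complex sequence $(a_n)_{n\ge1}$, $T(a_n)f(x)=\sum_{n=1}^\infty a_nf(nx)$ ($x>0$); when $\sum|a_n|/\sqrt n<\infty$ this extends to a bounded operator on $L^2[0,\infty)$. The Dirichlet convolution is $(a\ast b)_k=\sum_{mn=k}a_mb_n$; the convolution inverse of $(a_n)$ (with $a_1\ne0$) is the unique $(b_n)$ with $a\ast b=\delta$, where $\delta_1=1$, $\delta_n=0$ for $n>1$. $Sf(x)=\frac1x f(1/x)$. $\overline{b_n}$ denotes the complex-conjugate sequence. *)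

theory Defs
  imports "HOL-Analysis.Analysis"
begin

text \<open>Sequences (a_n) with n \<ge> 1 are modelled as functions nat \<Rightarrow> complex; the value at 0 is ignored.\<close>

definition dirichlet_conv :: "(nat \<Rightarrow> complex) \<Rightarrow> (nat \<Rightarrow> complex) \<Rightarrow> nat \<Rightarrow> complex" where
  "dirichlet_conv a b k = (\<Sum>d | d dvd k. a d * b (k div d))"

definition conv_inverse :: "(nat \<Rightarrow> complex) \<Rightarrow> (nat \<Rightarrow> complex) \<Rightarrow> bool" where
  "conv_inverse a b \<longleftrightarrow> (\<forall>k\<ge>1. dirichlet_conv a b k = (if k = 1 then 1 else 0))"

text \<open>The measure space [0,\<infinity>) (the point 0 is a null set), Lebesgue measure.\<close>
abbreviation Mpos :: "real measure" where
  "Mpos \<equiv> lebesgue_on {0<..}"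

definition L2pos :: "(real \<Rightarrow> complex) set" where
  "L2pos = {f. f \<in> borel_measurable Mpos \<and> integrable Mpos (\<lambda>x. (cmod (f x))\<^sup>2)}"

definition L2norm :: "(real \<Rightarrow> complex) \<Rightarrow> real" where
  "L2norm f = sqrt (\<integral>x. (cmod (f x))\<^sup>2 \<partial>Mpos)"

definition Tmult :: "(nat \<Rightarrow> complex) \<Rightarrow> (real \<Rightarrow> complex) \<Rightarrow> real \<Rightarrow> complex" where
  "Tmult a f x = (\<Sum>n. a (Suc n) * f (real (Suc n) * x))"

definition Sop :: "(real \<Rightarrow> complex) \<Rightarrow> real \<Rightarrow> complex" where
  "Sop f x = f (1 / x) / complex_of_real x"

definition Fop :: "(nat \<Rightarrow> complex) \<Rightarrow> (nat \<Rightarrow> complex) \<Rightarrow> (real \<Rightarrow> complex) \<Rightarrow> real \<Rightarrow> complex" where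
  "Fop a b f = Tmult (\<lambda>n. cnj (b n)) (Sop (Tmult a f))"

text \<open>Unitary operator on L^2[0,\<infinity>), for an operator given on representatives:
  well defined on a.e.-classes, maps L2 into L2, linear, norm preserving and onto.\<close>
definition unitary_L2 :: "((real \<Rightarrow> complex) \<Rightarrow> real \<Rightarrow> complex) \<Rightarrow> bool" where
  "unitary_L2 U \<longleftrightarrow>
     (\<forall>f\<in>L2pos. \<forall>g\<in>L2pos. (AE x in Mpos. f x = g x) \<longrightarrow> (AE x in Mpos. U f x = U g x)) \<and>
     (\<forall>f\<in>L2pos. U f \<in> L2pos \<and> L2norm (U f) = L2norm f) \<and>
     (\<forall>f\<in>L2pos. \<forall>g\<in>L2pos. \<forall>c::complex.
        AE x in Mpos. U (\<lambda>y. f y + c * g y) x = U f x + c * U g x) \<and>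
     (\<forall>g\<in>L2pos. \<exists>f\<in>L2pos. AE x in Mpos. U f x = g x)"

end

theory Submission
  imports Defs
begin


lemma S0_lebesgue[simp]: "{0::real<..} \<in> sets lebesgue" by simp

lemma space_Mpos[simp]: "space Mpos = {0<..}" by simp

lemma sets_Mpos: "A \<in> sets Mpos \<longleftrightarrow> A \<in> sets lebesgue \<and> A \<subseteq> {0<..}"
  by (auto simp: sets_restrict_space_iff)

lemma dil_measurable:
  assumes r: "r > (0::real)"
  shows "(\<lambda>x. r * x) \<in> Mpos \<rightarrow>\<^sub>M Mpos"
proof -
  have e: "(\<lambda>x::real. r * x) = (*\<^sub>R) r" by (auto simp: fun_eq_iff)
  have "(\<lambda>x. r * x) \<in> lebesgue \<rightarrow>\<^sub>M lebesgue"
    unfolding e by (rule lebesgue_measurable_scaling)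
  then show ?thesis
    by (rule measurable_restrict_space3) (use r in auto)
qed

lemma inv_measurable: "(\<lambda>x::real. 1 / x) \<in> Mpos \<rightarrow>\<^sub>M Mpos"
proof (rule measurableI)
  fix A assume A: "A \<in> sets Mpos"
  have eq: "(\<lambda>x::real. 1/x) -` A \<inter> space Mpos = (\<lambda>x. 1/x) ` A"
  proof -
    have sub: "A \<subseteq> {0<..}" using A sets.sets_into_space by fastforce
    show ?thesis
    proof (intro set_eqI iffI)
      fix x assume "x \<in> (\<lambda>x::real. 1/x) -` A \<inter> space Mpos"
      then have "1/x \<in> A" "x > 0" by auto
      then show "x \<in> (\<lambda>x. 1/x) ` A" by (intro image_eqI[of _ _ "1/x"]) auto
    next
      fix x assume "x \<in> (\<lambda>x::real. 1/x) ` A"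
      then obtain a where "a \<in> A" "x = 1/a" by auto
      with sub show "x \<in> (\<lambda>x::real. 1/x) -` A \<inter> space Mpos" by auto
    qed
  qed
  have "(\<lambda>x::real. 1/x) differentiable_on {0<..}"
    by (auto intro!: derivative_intros simp: differentiable_on_def)
  then have "(\<lambda>x::real. 1/x) ` A \<in> sets (lebesgue_on ((\<lambda>x. 1/x) ` {0<..}))"
    by (intro differentiable_image_in_sets_lebesgue_on) (use A in auto)
  moreover have "(\<lambda>x::real. 1/x) ` {0<..} = {0<..}"
  proof (intro set_eqI iffI)
    fix x :: real assume "x \<in> {0<..}"
    then show "x \<in> (\<lambda>x. 1/x) ` {0<..}" by (intro image_eqI[of _ _ "1/x"]) auto
  qed auto
  ultimately show "(\<lambda>x::real. 1/x) -` A \<inter> space Mpos \<in> sets Mpos" using eq by simp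
qed auto

lemma Mpos_ext_measurable:
  fixes g :: "real \<Rightarrow> 'b::{zero,topological_space}"
  assumes g: "g \<in> borel_measurable Mpos"
  shows "(\<lambda>x. if x \<in> {0<..} then g x else 0) \<in> borel_measurable lebesgue"
  using g by (subst (asm) measurable_restrict_space_iff[where c=0]) auto

lemma nn_dil:
  fixes g :: "real \<Rightarrow> ennreal"
  assumes r: "r > 0" and g: "g \<in> borel_measurable Mpos"
  shows "(\<integral>\<^sup>+x. g (r * x) \<partial>Mpos) = ennreal (1/r) * (\<integral>\<^sup>+x. g x \<partial>Mpos)"
proof -
  define h where "h = (\<lambda>x. if x \<in> {0::real<..} then g x else 0)"
  have h: "h \<in> borel_measurable lebesgue" unfolding h_def by (rule Mpos_ext_measurable[OF g])
  have "(\<integral>\<^sup>+x. g x \<partial>Mpos) = (\<integral>\<^sup>+x. h x \<partial>lebesgue)"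
    by (subst nn_integral_restrict_space) (auto simp: h_def indicator_def intro!: nn_integral_cong)
  also have "\<dots> = ennreal \<bar>r\<bar> * (\<integral>\<^sup>+x. h (0 + r * x) \<partial>lebesgue)"
    by (rule nn_integral_real_affine_lebesgue[OF h]) (use r in auto)
  also have "(\<integral>\<^sup>+x. h (0 + r * x) \<partial>lebesgue) = (\<integral>\<^sup>+x. g (r * x) \<partial>Mpos)"
    by (subst nn_integral_restrict_space) 
       (use r in \<open>auto simp: h_def indicator_def zero_less_mult_iff intro!: nn_integral_cong\<close>)
  finally have "(\<integral>\<^sup>+x. g x \<partial>Mpos) = ennreal r * (\<integral>\<^sup>+x. g (r * x) \<partial>Mpos)" using r by simp
  then have "ennreal (1/r) * (\<integral>\<^sup>+x. g x \<partial>Mpos) = (ennreal (1/r) * ennreal r) * (\<integral>\<^sup>+x. g (r * x) \<partial>Mpos)"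
    by (simp add: mult.assoc)
  also have "ennreal (1/r) * ennreal r = 1" using r by (simp add: ennreal_mult[symmetric])
  finally show ?thesis by simp
qed

lemma AE_dil:
  assumes r: "r > (0::real)" and P: "AE x in Mpos. P x"
  shows "AE x in Mpos. P (r * x)"
proof -
  obtain N where N: "\<And>x. x \<in> space Mpos - N \<Longrightarrow> P x" "N \<in> null_sets Mpos"
    using AE_E3[OF P] by blast
  have Nm: "N \<in> sets Mpos" using N(2) by auto
  let ?N' = "(\<lambda>x. r * x) -` N \<inter> space Mpos"
  have N'm: "?N' \<in> sets Mpos" using measurable_sets[OF dil_measurable[OF r] Nm] .
  have "emeasure Mpos ?N' = (\<integral>\<^sup>+x. indicator ?N' x \<partial>Mpos)"
    using N'm by simp
  also have "\<dots> = (\<integral>\<^sup>+x. indicator N (r * x) \<partial>Mpos)"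
    by (intro nn_integral_cong) (auto simp: indicator_def)
  also have "\<dots> = ennreal (1/r) * (\<integral>\<^sup>+x. indicator N x \<partial>Mpos)"
    by (rule nn_dil[OF r]) (use Nm in simp)
  also have "\<dots> = 0" using N(2) Nm by (simp add: null_sets_def)
  finally have "?N' \<in> null_sets Mpos" using N'm by (simp add: null_sets_def)
  then show ?thesis
    by (rule AE_I') (use N(1) r in \<open>auto, metis mult_pos_pos\<close>)
qed

lemma integrable_Mpos_iff: "integrable Mpos f \<longleftrightarrow> set_integrable lebesgue {0<..} (f::real\<Rightarrow>real)"
  unfolding set_integrable_def by (rule integrable_restrict_space) simp

lemma integral_Mpos_eq: "integral\<^sup>L Mpos f = set_lebesgue_integral lebesgue {0<..} (f::real\<Rightarrow>real)"
  unfolding set_lebesgue_integral_def by (rule integral_restrict_space) simp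

lemma int_inv:
  fixes f :: "real \<Rightarrow> real"
  assumes f: "integrable Mpos f"
  shows "integrable Mpos (\<lambda>x. f (1/x) / x\<^sup>2)" "(\<integral>x. f (1/x) / x\<^sup>2 \<partial>Mpos) = (\<integral>x. f x \<partial>Mpos)"
proof -
  have img: "(\<lambda>x::real. 1/x) ` {0<..} = {0<..}"
  proof (intro set_eqI iffI)
    fix x :: real assume "x \<in> {0<..}"
    then show "x \<in> (\<lambda>x. 1/x) ` {0<..}" by (intro image_eqI[of _ _ "1/x"]) auto
  qed auto
  have der: "((\<lambda>x. 1/x) has_field_derivative (- 1 / x\<^sup>2)) (at x within {0<..})" if "x \<in> {0<..}" for x :: real
    using that by (auto intro!: derivative_eq_intros simp: power2_eq_square field_simps)
  have inj: "inj_on (\<lambda>x::real. 1/x) {0<..}" by (auto simp: inj_on_def)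
  have fa: "f absolutely_integrable_on {0<..}" using f by (simp add: integrable_Mpos_iff)
  have fa': "f absolutely_integrable_on ((\<lambda>x. 1/x) ` {0<..})" using fa img by simp
  have "(\<lambda>x. \<bar>- 1 / x\<^sup>2\<bar> * f (1/x)) absolutely_integrable_on {0<..} \<and>
           integral {0<..} (\<lambda>x. \<bar>- 1 / x\<^sup>2\<bar> * f (1/x)) = integral ((\<lambda>x. 1/x) ` {0<..}) f"
    using has_absolute_integral_change_of_variables_1'[OF _ der inj, of f "integral ((\<lambda>x. 1/x) ` {0<..}) f"] fa'
    by simp
  moreover have "\<And>x::real. \<bar>- 1 / x\<^sup>2\<bar> * f (1/x) = f (1/x) / x\<^sup>2" by simp
  ultimately have 1: "(\<lambda>x. f (1/x) / x\<^sup>2) absolutely_integrable_on {0<..}"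
     and 2: "integral {0<..} (\<lambda>x. f (1/x) / x\<^sup>2) = integral {0<..} f" using img by auto
  show "integrable Mpos (\<lambda>x. f (1/x) / x\<^sup>2)" using 1 by (simp add: integrable_Mpos_iff)
  show "(\<integral>x. f (1/x) / x\<^sup>2 \<partial>Mpos) = (\<integral>x. f x \<partial>Mpos)"
    using 1 2 fa by (simp add: integral_Mpos_eq set_lebesgue_integral_eq_integral)
qed

lemma AE_inv:
  assumes P: "AE x in Mpos. P x"
  shows "AE x in Mpos. P (1 / x)"
proof -
  obtain N where N: "\<And>x. x \<in> space Mpos - N \<Longrightarrow> P x" "N \<in> null_sets Mpos"
    using AE_E3[OF P] by blast
  have Nm: "N \<in> sets Mpos" using N(2) by auto
  have ii: "integrable Mpos (indicator N :: real \<Rightarrow> real)"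
    using N(2) by (intro integrable_real_indicator) (auto simp: null_sets_def)
  have i0: "(\<integral>x. indicator N x \<partial>Mpos) = (0::real)"
  proof -
    have "N \<inter> {0<..} = N" using sets.sets_into_space[OF Nm] by auto
    then show ?thesis using N(2) by (simp add: null_sets_def measure_def)
  qed
  have "(\<integral>x. (indicator N (1/x) :: real) / x\<^sup>2 \<partial>Mpos) = 0"
    using int_inv(2)[OF ii] i0 by simp
  then have "AE x in Mpos. (indicator N (1/x) :: real) / x\<^sup>2 = 0"
    using int_inv(1)[OF ii] by (subst (asm) integral_nonneg_eq_0_iff_AE) auto
  then show ?thesis
  proof (rule AE_mp, intro AE_I2 impI)
    fix x assume "x \<in> space Mpos" "(indicator N (1/x) :: real) / x\<^sup>2 = 0"
    then have "1/x \<notin> N" "1/x \<in> space Mpos" by (auto simp: indicator_def)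
    then show "P (1/x)" using N(1) by auto
  qed
qed



lemma cs_weighted:
  fixes c g r :: "nat \<Rightarrow> real"
  assumes r: "\<And>n. r n > 0" and c: "\<And>n. c n \<ge> 0"
  shows "(\<Sum>n<N. c n * g n)\<^sup>2 \<le> (\<Sum>n<N. c n / sqrt (r n)) * (\<Sum>n<N. c n * sqrt (r n) * (g n)\<^sup>2)"
proof -
  have "(\<Sum>n<N. c n * g n) = (\<Sum>n<N. sqrt (c n / sqrt (r n)) * (sqrt (c n * sqrt (r n)) * g n))"
  proof (intro sum.cong refl)
    fix n
    have "sqrt (c n / sqrt (r n)) * sqrt (c n * sqrt (r n)) = sqrt (c n / sqrt (r n) * (c n * sqrt (r n)))"
      by (rule real_sqrt_mult[symmetric])
    also have "c n / sqrt (r n) * (c n * sqrt (r n)) = (c n)\<^sup>2" using r[of n] by (simp add: power2_eq_square field_simps)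
    also have "sqrt ((c n)\<^sup>2) = c n" using c[of n] by simp
    finally have e: "sqrt (c n / sqrt (r n)) * sqrt (c n * sqrt (r n)) = c n" .
    show "c n * g n = sqrt (c n / sqrt (r n)) * (sqrt (c n * sqrt (r n)) * g n)"
      by (subst e[symmetric]) (simp only: mult.assoc)
  qed
  also have "(\<dots>)\<^sup>2 \<le> (\<Sum>n<N. (sqrt (c n / sqrt (r n)))\<^sup>2) * (\<Sum>n<N. (sqrt (c n * sqrt (r n)) * g n)\<^sup>2)"
    by (rule Cauchy_Schwarz_ineq_sum)
  also have "\<dots> = (\<Sum>n<N. c n / sqrt (r n)) * (\<Sum>n<N. c n * sqrt (r n) * (g n)\<^sup>2)"
  proof -
    have "(sqrt (c n / sqrt (r n)))\<^sup>2 = c n / sqrt (r n)" "(sqrt (c n * sqrt (r n)))\<^sup>2 = c n * sqrt (r n)" for n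
      using r[of n] c[of n] by (simp_all add: less_imp_le)
    then show ?thesis by (simp add: power_mult_distrib)
  qed
  finally show ?thesis .
qed

lemma Gen_bound_nn:
  fixes c r :: "nat \<Rightarrow> real" and g :: "real \<Rightarrow> real"
  assumes r: "\<And>n. r n > 0" and c: "\<And>n. c n \<ge> 0"
    and W: "summable (\<lambda>n. c n / sqrt (r n))"
    and g[measurable]: "g \<in> borel_measurable Mpos" and g0: "\<And>x. g x \<ge> 0"
  shows "(\<integral>\<^sup>+x. (SUP N. ennreal ((\<Sum>n<N. c n * g (r n * x))\<^sup>2)) \<partial>Mpos)
     \<le> ennreal ((\<Sum>n. c n / sqrt (r n))\<^sup>2) * (\<integral>\<^sup>+x. ennreal ((g x)\<^sup>2) \<partial>Mpos)"
proof -
  define Wt where "Wt = (\<Sum>n. c n / sqrt (r n))"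
  have cr0: "\<And>n. c n / sqrt (r n) \<ge> 0" by (rule divide_nonneg_nonneg[OF c]) (use r in \<open>simp add: less_imp_le\<close>)
  have WN: "(\<Sum>n<N. c n / sqrt (r n)) \<le> Wt" for N
    unfolding Wt_def by (rule sum_le_suminf[OF W]) (use cr0 in auto)
  have Wt0: "Wt \<ge> 0" using WN[of 0] by simp
  have gm[measurable]: "(\<lambda>x. g (r n * x)) \<in> borel_measurable Mpos" for n
    using measurable_compose[OF dil_measurable[OF r[of n]] g] by (simp add: o_def)
  have inc: "incseq (\<lambda>N x. ennreal ((\<Sum>n<N. c n * g (r n * x))\<^sup>2))"
  proof (intro incseq_SucI le_funI ennreal_leI power_mono)
    fix N x
    show "(\<Sum>n<N. c n * g (r n * x)) \<le> (\<Sum>n<Suc N. c n * g (r n * x))"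
      using c g0 by simp
    show "0 \<le> (\<Sum>n<N. c n * g (r n * x))" using c g0 by (intro sum_nonneg) simp
  qed
  have "(\<integral>\<^sup>+x. (SUP N. ennreal ((\<Sum>n<N. c n * g (r n * x))\<^sup>2)) \<partial>Mpos)
       = (SUP N. \<integral>\<^sup>+x. ennreal ((\<Sum>n<N. c n * g (r n * x))\<^sup>2) \<partial>Mpos)"
    by (rule nn_integral_monotone_convergence_SUP[OF inc]) measurable
  also have "\<dots> \<le> ennreal (Wt\<^sup>2) * (\<integral>\<^sup>+x. ennreal ((g x)\<^sup>2) \<partial>Mpos)"
  proof (rule SUP_least)
    fix N
    have "(\<integral>\<^sup>+x. ennreal ((\<Sum>n<N. c n * g (r n * x))\<^sup>2) \<partial>Mpos)
        \<le> (\<integral>\<^sup>+x. ennreal Wt * (\<Sum>n<N. ennreal (c n * sqrt (r n)) * ennreal ((g (r n * x))\<^sup>2)) \<partial>Mpos)"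
    proof (rule nn_integral_mono)
      fix x
      have "(\<Sum>n<N. c n * g (r n * x))\<^sup>2 \<le> (\<Sum>n<N. c n / sqrt (r n)) * (\<Sum>n<N. c n * sqrt (r n) * (g (r n * x))\<^sup>2)"
        by (rule cs_weighted[OF r c])
      also have "\<dots> \<le> Wt * (\<Sum>n<N. c n * sqrt (r n) * (g (r n * x))\<^sup>2)"
        by (intro mult_right_mono WN sum_nonneg mult_nonneg_nonneg) (use c r in \<open>auto simp: less_imp_le\<close>)
      finally have "ennreal ((\<Sum>n<N. c n * g (r n * x))\<^sup>2) \<le> ennreal (Wt * (\<Sum>n<N. c n * sqrt (r n) * (g (r n * x))\<^sup>2))"
        by (rule ennreal_leI)
      also have "\<dots> = ennreal Wt * (\<Sum>n<N. ennreal (c n * sqrt (r n)) * ennreal ((g (r n * x))\<^sup>2))"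
      proof -
        have q0: "\<And>n. 0 \<le> c n * sqrt (r n) * (g (r n * x))\<^sup>2"
          using c r by (simp add: less_imp_le)
        have "ennreal (Wt * (\<Sum>n<N. c n * sqrt (r n) * (g (r n * x))\<^sup>2))
              = ennreal Wt * ennreal (\<Sum>n<N. c n * sqrt (r n) * (g (r n * x))\<^sup>2)"
          using Wt0 q0 by (intro ennreal_mult sum_nonneg) auto
        also have "ennreal (\<Sum>n<N. c n * sqrt (r n) * (g (r n * x))\<^sup>2) = (\<Sum>n<N. ennreal (c n * sqrt (r n) * (g (r n * x))\<^sup>2))"
          using q0 by (subst sum_ennreal) auto
        also have "\<dots> = (\<Sum>n<N. ennreal (c n * sqrt (r n)) * ennreal ((g (r n * x))\<^sup>2))"
          using c r by (intro sum.cong refl ennreal_mult) (auto simp: less_imp_le)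
        finally show ?thesis .
      qed
      finally show "ennreal ((\<Sum>n<N. c n * g (r n * x))\<^sup>2) \<le> ennreal Wt * (\<Sum>n<N. ennreal (c n * sqrt (r n)) * ennreal ((g (r n * x))\<^sup>2))" .
    qed
    also have "\<dots> = ennreal Wt * (\<Sum>n<N. ennreal (c n * sqrt (r n)) * (\<integral>\<^sup>+x. ennreal ((g (r n * x))\<^sup>2) \<partial>Mpos))"
      by (simp add: nn_integral_cmult nn_integral_sum)
    also have "\<dots> = ennreal Wt * (\<Sum>n<N. ennreal (c n / sqrt (r n)) * (\<integral>\<^sup>+x. ennreal ((g x)\<^sup>2) \<partial>Mpos))"
    proof -
      have "ennreal (c n * sqrt (r n)) * (\<integral>\<^sup>+x. ennreal ((g (r n * x))\<^sup>2) \<partial>Mpos)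
          = ennreal (c n / sqrt (r n)) * (\<integral>\<^sup>+x. ennreal ((g x)\<^sup>2) \<partial>Mpos)" for n
      proof -
        have "(\<integral>\<^sup>+x. ennreal ((g (r n * x))\<^sup>2) \<partial>Mpos) = ennreal (1 / r n) * (\<integral>\<^sup>+x. ennreal ((g x)\<^sup>2) \<partial>Mpos)"
          by (rule nn_dil[OF r[of n], of "\<lambda>x. ennreal ((g x)\<^sup>2)"]) measurable
        moreover have "ennreal (c n * sqrt (r n)) * ennreal (1 / r n) = ennreal (c n / sqrt (r n))"
        proof -
          have "c n * sqrt (r n) * (1 / r n) = c n / sqrt (r n)"
            using r[of n] by (simp add: field_simps)
          then show ?thesis using c[of n] r[of n] by (simp add: ennreal_mult[symmetric])
        qed
        ultimately show ?thesis by (simp add: mult.assoc[symmetric])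
      qed
      then show ?thesis by simp
    qed
    also have "\<dots> = ennreal Wt * ennreal (\<Sum>n<N. c n / sqrt (r n)) * (\<integral>\<^sup>+x. ennreal ((g x)\<^sup>2) \<partial>Mpos)"
      using cr0 by (simp add: sum_distrib_right[symmetric] mult.assoc)
    also have "\<dots> \<le> ennreal Wt * ennreal Wt * (\<integral>\<^sup>+x. ennreal ((g x)\<^sup>2) \<partial>Mpos)"
      by (intro mult_right_mono mult_left_mono ennreal_leI WN) auto
    also have "\<dots> = ennreal (Wt\<^sup>2) * (\<integral>\<^sup>+x. ennreal ((g x)\<^sup>2) \<partial>Mpos)"
      using Wt0 by (simp add: ennreal_mult[symmetric] power2_eq_square)
    finally show "(\<integral>\<^sup>+x. ennreal ((\<Sum>n<N. c n * g (r n * x))\<^sup>2) \<partial>Mpos) \<le> ennreal (Wt\<^sup>2) * (\<integral>\<^sup>+x. ennreal ((g x)\<^sup>2) \<partial>Mpos)" .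
  qed
  finally show ?thesis unfolding Wt_def .
qed

lemma L2posD:
  assumes "f \<in> L2pos"
  shows "f \<in> borel_measurable Mpos" "integrable Mpos (\<lambda>x. (cmod (f x))\<^sup>2)"
  using assms by (auto simp: L2pos_def)

lemma L2pos_nn:
  assumes "f \<in> L2pos"
  shows "(\<integral>\<^sup>+x. ennreal ((cmod (f x))\<^sup>2) \<partial>Mpos) = ennreal (\<integral>x. (cmod (f x))\<^sup>2 \<partial>Mpos)"
  using L2posD[OF assms] by (intro nn_integral_eq_integral) auto

definition Gen :: "(nat \<Rightarrow> complex) \<Rightarrow> (nat \<Rightarrow> real) \<Rightarrow> (real \<Rightarrow> complex) \<Rightarrow> real \<Rightarrow> complex" where
  "Gen c r f x = (\<Sum>n. c n * f (r n * x))"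

lemma dil_comp_meas:
  fixes f :: "real \<Rightarrow> 'b::topological_space"
  assumes "r > 0" "f \<in> borel_measurable Mpos"
  shows "(\<lambda>x. f (r * x)) \<in> borel_measurable Mpos"
  using measurable_compose[OF dil_measurable[OF assms(1)] assms(2)] by (simp add: o_def)

lemma Gen_meas:
  assumes r: "\<And>n. r n > 0" and f: "f \<in> borel_measurable Mpos"
  shows "Gen c r f \<in> borel_measurable Mpos"
proof -
  have [measurable]: "(\<lambda>x. f (r n * x)) \<in> borel_measurable Mpos" for n
    by (rule dil_comp_meas[OF r f])
  show ?thesis unfolding Gen_def[abs_def] by measurable
qed

lemma Gen_L2:
  assumes r: "\<And>n. r n > 0" and W: "summable (\<lambda>n. cmod (c n) / sqrt (r n))" and f: "f \<in> L2pos"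
  shows "AE x in Mpos. summable (\<lambda>n. cmod (c n * f (r n * x)))"
    and "Gen c r f \<in> L2pos"
proof -
  define g where "g = (\<lambda>x. cmod (f x))"
  define cc where "cc = (\<lambda>n. cmod (c n))"
  define P where "P = (\<lambda>N x. \<Sum>n<N. cc n * g (r n * x))"
  define H where "H = (\<lambda>x. SUP N. ennreal ((P N x)\<^sup>2))"
  have fm[measurable]: "f \<in> borel_measurable Mpos" using L2posD[OF f] by simp
  have gm[measurable]: "g \<in> borel_measurable Mpos" unfolding g_def by measurable
  have gdm[measurable]: "(\<lambda>x. g (r n * x)) \<in> borel_measurable Mpos" for n
    by (rule dil_comp_meas[OF r gm])
  have Hm[measurable]: "H \<in> borel_measurable Mpos" unfolding H_def P_def by measurable
  have "(\<integral>\<^sup>+x. H x \<partial>Mpos) \<le> ennreal ((\<Sum>n. cc n / sqrt (r n))\<^sup>2) * (\<integral>\<^sup>+x. ennreal ((g x)\<^sup>2) \<partial>Mpos)"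
    unfolding H_def P_def by (rule Gen_bound_nn[OF r]) (use W in \<open>auto simp: cc_def g_def\<close>)
  also have "\<dots> < \<infinity>" using L2pos_nn[OF f] by (simp add: g_def ennreal_mult_less_top)
  finally have Hfin: "(\<integral>\<^sup>+x. H x \<partial>Mpos) \<noteq> \<infinity>" by simp
  have AEH: "AE x in Mpos. H x \<noteq> \<infinity>" by (rule nn_integral_PInf_AE[OF Hm Hfin])
  have summ: "summable (\<lambda>n. cc n * g (r n * x))" if Hx: "H x \<noteq> \<infinity>" for x
  proof (rule summableI_nonneg_bounded)
    show "0 \<le> cc n * g (r n * x)" for n by (simp add: cc_def g_def)
    fix N
    have "ennreal ((P N x)\<^sup>2) \<le> H x" unfolding H_def by (rule SUP_upper) simp
    also have "H x = ennreal (enn2real (H x))" using Hx by (simp add: less_top)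
    finally have "(P N x)\<^sup>2 \<le> enn2real (H x)" by (subst (asm) ennreal_le_iff) auto
    then show "(\<Sum>n<N. cc n * g (r n * x)) \<le> sqrt (enn2real (H x))"
      unfolding P_def by (intro real_le_rsqrt)
  qed
  show AEs: "AE x in Mpos. summable (\<lambda>n. cmod (c n * f (r n * x)))"
    using AEH by eventually_elim (use summ in \<open>simp add: cc_def g_def norm_mult\<close>)
  have bound: "ennreal (norm ((cmod (Gen c r f x))\<^sup>2)) \<le> H x" if Hx: "H x \<noteq> \<infinity>" for x
  proof -
    define L where "L = (\<Sum>n. cc n * g (r n * x))"
    have s: "summable (\<lambda>n. cc n * g (r n * x))" by (rule summ[OF Hx])
    have "cmod (Gen c r f x) \<le> L"
      unfolding Gen_def L_def using summable_norm[of "\<lambda>n. c n * f (r n * x)"] s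
      by (simp add: cc_def g_def norm_mult)
    moreover have "0 \<le> cmod (Gen c r f x)" by simp
    ultimately have "(cmod (Gen c r f x))\<^sup>2 \<le> L\<^sup>2" by (rule power_mono)
    moreover have "ennreal (L\<^sup>2) \<le> H x"
    proof (rule LIMSEQ_le_const2)
      show "(\<lambda>N. ennreal ((P N x)\<^sup>2)) \<longlonglongrightarrow> ennreal (L\<^sup>2)"
        unfolding P_def L_def by (intro tendsto_ennrealI tendsto_power summable_LIMSEQ s)
      show "\<exists>N. \<forall>n\<ge>N. ennreal ((P n x)\<^sup>2) \<le> H x" unfolding H_def by (intro exI[of _ 0] allI impI SUP_upper) auto
    qed
    ultimately show ?thesis by (simp add: order_trans[OF ennreal_leI])
  qed
  have Gm: "Gen c r f \<in> borel_measurable Mpos" by (rule Gen_meas[OF r fm])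
  have "integrable Mpos (\<lambda>x. (cmod (Gen c r f x))\<^sup>2)"
  proof (rule integrableI_bounded)
    show "(\<lambda>x. (cmod (Gen c r f x))\<^sup>2) \<in> borel_measurable Mpos" using Gm by measurable
    have "(\<integral>\<^sup>+x. ennreal (norm ((cmod (Gen c r f x))\<^sup>2)) \<partial>Mpos) \<le> (\<integral>\<^sup>+x. H x \<partial>Mpos)"
      by (intro nn_integral_mono_AE) (use AEH bound in \<open>auto elim!: AE_mp\<close>)
    also have "\<dots> < \<infinity>" using Hfin by (simp add: less_top)
    finally show "(\<integral>\<^sup>+x. ennreal (norm ((cmod (Gen c r f x))\<^sup>2)) \<partial>Mpos) < \<infinity>" .
  qed
  then show "Gen c r f \<in> L2pos" using Gm by (simp add: L2pos_def)
qed



lemma inv_comp_meas: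
  fixes f :: "real \<Rightarrow> 'b::topological_space"
  assumes "f \<in> borel_measurable Mpos"
  shows "(\<lambda>x. f (1 / x)) \<in> borel_measurable Mpos"
  using measurable_compose[OF inv_measurable assms] by (simp add: o_def)

lemma sq_sum_le: "(a + b)\<^sup>2 \<le> 2 * a\<^sup>2 + 2 * (b::real)\<^sup>2"
proof -
  have "0 \<le> (a - b)\<^sup>2" by simp
  then show ?thesis by (simp add: power2_eq_square algebra_simps)
qed

lemma id_Mpos_meas[measurable]: "(\<lambda>x::real. x) \<in> borel_measurable Mpos"
  by (intro measurable_restrict_space1 measurable_completion) simp

lemma Sop_meas:
  assumes "f \<in> borel_measurable Mpos"
  shows "Sop f \<in> borel_measurable Mpos"
proof -
  have [measurable]: "(\<lambda>x. f (1 / x)) \<in> borel_measurable Mpos" by (rule inv_comp_meas[OF assms])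
  show ?thesis unfolding Sop_def[abs_def] by measurable
qed

lemma Sop_L2:
  assumes f: "f \<in> L2pos"
  shows "Sop f \<in> L2pos" "L2norm (Sop f) = L2norm f"
proof -
  have e: "(cmod (Sop f x))\<^sup>2 = (cmod (f (1/x)))\<^sup>2 / x\<^sup>2" for x
    by (simp add: Sop_def norm_divide power_divide)
  have i: "integrable Mpos (\<lambda>x. (cmod (f x))\<^sup>2)" using L2posD[OF f] by simp
  show "Sop f \<in> L2pos" using int_inv(1)[OF i] Sop_meas[OF L2posD(1)[OF f]]
    by (simp add: L2pos_def e)
  show "L2norm (Sop f) = L2norm f" using int_inv(2)[OF i] by (simp add: L2norm_def e)
qed

lemma Sop_Sop: "x > 0 \<Longrightarrow> Sop (Sop f) x = f x"
  by (simp add: Sop_def field_simps)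

lemma AE_Sop_cong:
  assumes "AE x in Mpos. f x = g x"
  shows "AE x in Mpos. Sop f x = Sop g x"
  using AE_inv[OF assms] by eventually_elim (simp add: Sop_def)

lemma L2pos_lin:
  assumes f: "f \<in> L2pos" and g: "g \<in> L2pos"
  shows "(\<lambda>y. f y + k * g y) \<in> L2pos"
proof -
  have [measurable]: "f \<in> borel_measurable Mpos" "g \<in> borel_measurable Mpos" using f g by (auto simp: L2pos_def)
  have i2: "integrable Mpos (\<lambda>x. 2 * (cmod (f x))\<^sup>2 + 2 * (cmod k)\<^sup>2 * (cmod (g x))\<^sup>2)"
    using L2posD(2)[OF f] L2posD(2)[OF g] by auto
  have b: "(cmod (f x + k * g x))\<^sup>2 \<le> 2 * (cmod (f x))\<^sup>2 + 2 * (cmod k)\<^sup>2 * (cmod (g x))\<^sup>2" for x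
  proof -
    have "cmod (f x + k * g x) \<le> cmod (f x) + cmod k * cmod (g x)"
      by (metis norm_mult norm_triangle_ineq)
    then have "(cmod (f x + k * g x))\<^sup>2 \<le> (cmod (f x) + cmod k * cmod (g x))\<^sup>2"
      by (intro power_mono) auto
    also have "\<dots> \<le> 2 * (cmod (f x))\<^sup>2 + 2 * (cmod k)\<^sup>2 * (cmod (g x))\<^sup>2"
      using sq_sum_le[of "cmod (f x)" "cmod k * cmod (g x)"] by (simp add: power_mult_distrib)
    finally show ?thesis .
  qed
  have "integrable Mpos (\<lambda>x. (cmod (f x + k * g x))\<^sup>2)"
  proof (rule Bochner_Integration.integrable_bound[OF i2])
    show "AE x in Mpos. norm ((cmod (f x + k * g x))\<^sup>2) \<le> norm (2 * (cmod (f x))\<^sup>2 + 2 * (cmod k)\<^sup>2 * (cmod (g x))\<^sup>2)"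
    proof (rule AE_I2)
      fix x
      have "0 \<le> 2 * (cmod (f x))\<^sup>2 + 2 * (cmod k)\<^sup>2 * (cmod (g x))\<^sup>2" by simp
      then show "norm ((cmod (f x + k * g x))\<^sup>2) \<le> norm (2 * (cmod (f x))\<^sup>2 + 2 * (cmod k)\<^sup>2 * (cmod (g x))\<^sup>2)"
        using b[of x] by simp
    qed
  qed measurable
  then show ?thesis by (simp add: L2pos_def)
qed

lemma L2pos_AE:
  assumes f: "f \<in> L2pos" and g: "g \<in> borel_measurable Mpos" and ae: "AE x in Mpos. f x = g x"
  shows "g \<in> L2pos" "L2norm g = L2norm f"
proof -
  have ae2: "AE x in Mpos. (cmod (f x))\<^sup>2 = (cmod (g x))\<^sup>2" using ae by eventually_elim simp
  show "g \<in> L2pos" using L2posD(2)[OF f] g integrable_cong_AE[OF _ _ ae2] by (simp add: L2pos_def)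
  have [measurable]: "f \<in> borel_measurable Mpos" using f by (simp add: L2pos_def)
  have [measurable]: "g \<in> borel_measurable Mpos" using g by simp
  have "(\<integral>x. (cmod (f x))\<^sup>2 \<partial>Mpos) = (\<integral>x. (cmod (g x))\<^sup>2 \<partial>Mpos)"
    by (rule integral_cong_AE[OF _ _ ae2]) measurable
  then show "L2norm g = L2norm f" unfolding L2norm_def by simp
qed

lemma Gen_AE_cong:
  assumes r: "\<And>n. r n > 0" and ae: "AE x in Mpos. f x = g x"
  shows "AE x in Mpos. Gen c r f x = Gen c r g x"
proof -
  have "AE x in Mpos. \<forall>n. f (r n * x) = g (r n * x)"
    by (subst AE_all_countable) (intro allI AE_dil[OF r ae])
  then show ?thesis by eventually_elim (simp add: Gen_def)
qed

lemma Gen_lin: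
  assumes r: "\<And>n. r n > 0" and W: "summable (\<lambda>n. cmod (c n) / sqrt (r n))"
    and f: "f \<in> L2pos" and g: "g \<in> L2pos"
  shows "AE x in Mpos. Gen c r (\<lambda>y. f y + k * g y) x = Gen c r f x + k * Gen c r g x"
  using Gen_L2(1)[OF r W f] Gen_L2(1)[OF r W g]
proof eventually_elim
  case (elim x)
  have sf: "summable (\<lambda>n. c n * f (r n * x))" by (rule summable_norm_cancel[OF elim(1)])
  have sg: "summable (\<lambda>n. c n * g (r n * x))" by (rule summable_norm_cancel[OF elim(2)])
  have "Gen c r (\<lambda>y. f y + k * g y) x = (\<Sum>n. c n * f (r n * x) + k * (c n * g (r n * x)))"
    unfolding Gen_def by (simp add: algebra_simps)
  also have "\<dots> = (\<Sum>n. c n * f (r n * x)) + (\<Sum>n. k * (c n * g (r n * x)))"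
    by (rule suminf_add[symmetric]) (use sf sg summable_mult in auto)
  also have "\<dots> = Gen c r f x + k * Gen c r g x"
    unfolding Gen_def by (simp add: suminf_mult sg)
  finally show ?case .
qed



lemma cnj_meas[measurable]: "f \<in> borel_measurable M \<Longrightarrow> (\<lambda>x. cnj (f x)) \<in> borel_measurable M"
proof -
  have "cnj \<in> borel_measurable borel"
    by (rule borel_measurable_continuous_onI) (intro continuous_intros)
  then show "f \<in> borel_measurable M \<Longrightarrow> (\<lambda>x. cnj (f x)) \<in> borel_measurable M"
    using measurable_compose by (auto simp: o_def)
qed

lemma int_dil:
  fixes h :: "real \<Rightarrow> 'a::euclidean_space"
  assumes r: "r > 0" and h: "integrable Mpos h"
  shows "integrable Mpos (\<lambda>x. h (r * x))" "(\<integral>x. h (r * x) \<partial>Mpos) = (1 / r) *\<^sub>R (\<integral>x. h x \<partial>Mpos)"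
proof -
  define H where "H = (\<lambda>x. indicator {0::real<..} x *\<^sub>R h x)"
  have H: "integrable lebesgue H" using h unfolding H_def by (subst (asm) integrable_restrict_space) auto
  have eq: "H (r * x) = indicator {0<..} x *\<^sub>R h (r * x)" for x
    using r by (auto simp: H_def indicator_def zero_less_mult_iff)
  have "integrable lebesgue (\<lambda>x. H (0 + r * x))"
    by (rule lebesgue_integrable_real_affine[OF H]) (use r in auto)
  then show i: "integrable Mpos (\<lambda>x. h (r * x))"
    by (subst integrable_restrict_space) (auto simp: eq)
  have "(\<integral>x. h x \<partial>Mpos) = (\<integral>x. H x \<partial>lebesgue)"
    unfolding H_def by (rule integral_restrict_space) auto
  also have "\<dots> = \<bar>r\<bar> *\<^sub>R (\<integral>x. H (0 + r * x) \<partial>lebesgue)"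
    by (rule lebesgue_integral_real_affine) (use r in auto)
  also have "(\<integral>x. H (0 + r * x) \<partial>lebesgue) = (\<integral>x. h (r * x) \<partial>Mpos)"
    unfolding add_0 eq by (rule integral_restrict_space[symmetric]) auto
  finally show "(\<integral>x. h (r * x) \<partial>Mpos) = (1 / r) *\<^sub>R (\<integral>x. h x \<partial>Mpos)"
    using r by simp
qed

lemma L2pos_dil:
  assumes r: "r > 0" and f: "f \<in> L2pos"
  shows "(\<lambda>x. f (r * x)) \<in> L2pos" "(\<integral>x. (cmod (f (r * x)))\<^sup>2 \<partial>Mpos) = (1 / r) * (\<integral>x. (cmod (f x))\<^sup>2 \<partial>Mpos)"
  using int_dil[OF r L2posD(2)[OF f]] dil_comp_meas[OF r L2posD(1)[OF f]]
  by (auto simp: L2pos_def)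

definition IP :: "(real \<Rightarrow> complex) \<Rightarrow> (real \<Rightarrow> complex) \<Rightarrow> complex" where
  "IP u v = (\<integral>x. u x * cnj (v x) \<partial>Mpos)"

lemma amgm_t:
  fixes a b t :: real
  assumes "t > 0"
  shows "a * b \<le> (t * a\<^sup>2 + b\<^sup>2 / t) / 2"
proof -
  have "0 \<le> (sqrt t * a - b / sqrt t)\<^sup>2" by simp
  also have "\<dots> = t * a\<^sup>2 - 2 * a * b + b\<^sup>2 / t"
    using assms by (simp add: power2_eq_square field_simps)
  finally show ?thesis by simp
qed

lemma ip_integrable_bound:
  assumes u: "u \<in> L2pos" and v: "v \<in> L2pos" and t: "t > 0"
  shows "integrable Mpos (\<lambda>x. u x * cnj (v x))"
    "(\<integral>x. cmod (u x * cnj (v x)) \<partial>Mpos) \<le> (t * (\<integral>x. (cmod (u x))\<^sup>2 \<partial>Mpos) + (\<integral>x. (cmod (v x))\<^sup>2 \<partial>Mpos) / t) / 2"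
proof -
  have [measurable]: "u \<in> borel_measurable Mpos" "v \<in> borel_measurable Mpos" using u v by (auto simp: L2pos_def)
  have iB: "integrable Mpos (\<lambda>x. (t * (cmod (u x))\<^sup>2 + (cmod (v x))\<^sup>2 / t) / 2)"
    using L2posD(2)[OF u] L2posD(2)[OF v] by auto
  have b: "cmod (u x * cnj (v x)) \<le> (t * (cmod (u x))\<^sup>2 + (cmod (v x))\<^sup>2 / t) / 2" for x
    using amgm_t[OF t, of "cmod (u x)" "cmod (v x)"] by (simp add: norm_mult)
  show i: "integrable Mpos (\<lambda>x. u x * cnj (v x))"
  proof (rule Bochner_Integration.integrable_bound[OF iB])
    show "AE x in Mpos. norm (u x * cnj (v x)) \<le> norm ((t * (cmod (u x))\<^sup>2 + (cmod (v x))\<^sup>2 / t) / 2)"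
    proof (rule AE_I2)
      fix x
      have "0 \<le> (t * (cmod (u x))\<^sup>2 + (cmod (v x))\<^sup>2 / t) / 2" using t by simp
      then show "norm (u x * cnj (v x)) \<le> norm ((t * (cmod (u x))\<^sup>2 + (cmod (v x))\<^sup>2 / t) / 2)"
        using b[of x] by simp
    qed
  qed measurable
  have "(\<integral>x. cmod (u x * cnj (v x)) \<partial>Mpos) \<le> (\<integral>x. (t * (cmod (u x))\<^sup>2 + (cmod (v x))\<^sup>2 / t) / 2 \<partial>Mpos)"
    by (intro integral_mono iB b integrable_norm i)
  also have "\<dots> = (t * (\<integral>x. (cmod (u x))\<^sup>2 \<partial>Mpos) + (\<integral>x. (cmod (v x))\<^sup>2 \<partial>Mpos) / t) / 2"
    using L2posD(2)[OF u] L2posD(2)[OF v] by simp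
  finally show "(\<integral>x. cmod (u x * cnj (v x)) \<partial>Mpos) \<le> (t * (\<integral>x. (cmod (u x))\<^sup>2 \<partial>Mpos) + (\<integral>x. (cmod (v x))\<^sup>2 \<partial>Mpos) / t) / 2" .
qed

lemma ip_self:
  assumes u: "u \<in> L2pos"
  shows "IP u u = complex_of_real ((L2norm u)\<^sup>2)"
proof -
  have "IP u u = (\<integral>x. complex_of_real ((cmod (u x))\<^sup>2) \<partial>Mpos)"
    unfolding IP_def by (rule Bochner_Integration.integral_cong[OF refl]) (rule complex_norm_square[symmetric])
  also have "\<dots> = complex_of_real (\<integral>x. (cmod (u x))\<^sup>2 \<partial>Mpos)" by (rule integral_complex_of_real)
  also have "(\<integral>x. (cmod (u x))\<^sup>2 \<partial>Mpos) = (L2norm u)\<^sup>2"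
    unfolding L2norm_def by (simp add: integral_nonneg_AE)
  finally show ?thesis .
qed

lemma ip_AE_cong:
  assumes "u \<in> borel_measurable Mpos" "v \<in> borel_measurable Mpos" "u' \<in> borel_measurable Mpos" "v' \<in> borel_measurable Mpos"
    and "AE x in Mpos. u x = u' x" "AE x in Mpos. v x = v' x"
  shows "IP u v = IP u' v'"
  unfolding IP_def using assms(5,6)
  by (intro integral_cong_AE) (use assms(1-4) in \<open>measurable, auto elim!: AE_mp\<close>)



lemma sqrt_self_pos: "r > 0 \<Longrightarrow> sqrt r * sqrt (r::real) = r"
  by simp

lemma aux_cancel: "s \<noteq> 0 \<Longrightarrow> x * s / (s * s) = x / (s::real)"
  by (simp add: field_simps)

lemma W_adj:
  assumes r: "\<And>n. r n > 0" and W: "summable (\<lambda>n. cmod (c n) / sqrt (r n))"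
  shows "summable (\<lambda>n. cmod (cnj (c n) / r n) / sqrt (1 / r n))"
proof -
  have "cmod (cnj (c n) / r n) / sqrt (1 / r n) = cmod (c n) / sqrt (r n)" for n
  proof -
    have a: "cmod (cnj (c n) / r n) = cmod (c n) / r n" using r[of n] by (simp add: norm_divide)
    have s: "sqrt (r n) * sqrt (r n) = r n" using r[of n] by simp
    have sp: "sqrt (r n) > 0" using r[of n] by simp
    have "cmod (c n) * sqrt (r n) / r n = cmod (c n) * sqrt (r n) / (sqrt (r n) * sqrt (r n))" by (simp only: s)
    also have "\<dots> = cmod (c n) / sqrt (r n)" using sp by (intro aux_cancel) simp
    finally have e: "cmod (c n) * sqrt (r n) / r n = cmod (c n) / sqrt (r n)" .
    show ?thesis using a e by (simp add: real_sqrt_divide)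
  qed
  then show ?thesis using W by simp
qed

lemma Gen_adj:
  assumes r: "\<And>n. r n > 0" and W: "summable (\<lambda>n. cmod (c n) / sqrt (r n))"
    and f: "f \<in> L2pos" and g: "g \<in> L2pos"
  shows "IP (Gen c r f) g = IP f (Gen (\<lambda>n. cnj (c n) / r n) (\<lambda>n. 1 / r n) g)"
proof -
  define c' where "c' = (\<lambda>n. cnj (c n) / r n)"
  define r' where "r' = (\<lambda>n. 1 / r n)"
  have r': "\<And>n. r' n > 0" using r by (simp add: r'_def)
  have W': "summable (\<lambda>n. cmod (c' n) / sqrt (r' n))" unfolding c'_def r'_def by (rule W_adj[OF r W])
  have [measurable]: "f \<in> borel_measurable Mpos" "g \<in> borel_measurable Mpos" using f g by (auto simp: L2pos_def)
  have [measurable]: "(\<lambda>x. f (r n * x)) \<in> borel_measurable Mpos" for n by (rule dil_comp_meas[OF r]) measurable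
  have [measurable]: "(\<lambda>x. g (r' n * x)) \<in> borel_measurable Mpos" for n by (rule dil_comp_meas[OF r']) measurable
  have [measurable]: "Gen c r f \<in> borel_measurable Mpos" by (rule Gen_meas[OF r]) measurable
  have [measurable]: "Gen c' r' g \<in> borel_measurable Mpos" by (rule Gen_meas[OF r']) measurable
  define F where "F = (\<lambda>n x. c n * f (r n * x) * cnj (g x))"
  define G where "G = (\<lambda>n y. f y * (cnj (c' n) * cnj (g (r' n * y))))"
  define h where "h = (\<lambda>n y. c n * (f y * cnj (g (r' n * y))))"
  have gd: "(\<lambda>y. g (r' n * y)) \<in> L2pos" for n by (rule L2pos_dil(1)[OF r' g])
  have fd: "(\<lambda>y. f (r n * y)) \<in> L2pos" for n by (rule L2pos_dil(1)[OF r f])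
  have hi: "integrable Mpos (h n)" for n
    unfolding h_def using ip_integrable_bound(1)[OF f gd zero_less_one] by simp
  have Fh: "F n x = h n (r n * x)" for n x
    using r[of n] by (simp add: F_def h_def r'_def)
  have Gh: "G n y = (1 / r n) *\<^sub>R h n y" for n y
    using r[of n] by (simp add: G_def h_def c'_def scaleR_conv_of_real field_simps)
  have Fi: "integrable Mpos (F n)" for n unfolding Fh[abs_def] by (rule int_dil(1)[OF r hi])
  have Gi: "integrable Mpos (G n)" for n unfolding Gh[abs_def] using hi by simp
  have FG: "integral\<^sup>L Mpos (F n) = integral\<^sup>L Mpos (G n)" for n
    unfolding Fh[abs_def] Gh[abs_def] by (simp add: int_dil(2)[OF r hi])
  have nFG: "(\<integral>x. norm (F n x) \<partial>Mpos) = (\<integral>x. norm (G n x) \<partial>Mpos)" for n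
  proof -
    have hn: "integrable Mpos (\<lambda>y. norm (h n y))" using hi by simp
    show ?thesis unfolding Fh Gh using int_dil(2)[OF r hn] r[of n] by (simp add: less_imp_le)
  qed
  define K where "K = ((\<integral>x. (cmod (f x))\<^sup>2 \<partial>Mpos) + (\<integral>x. (cmod (g x))\<^sup>2 \<partial>Mpos)) / 2"
  have nF: "(\<integral>x. norm (F n x) \<partial>Mpos) \<le> cmod (c n) / sqrt (r n) * K" for n
  proof -
    have "(\<integral>x. norm (F n x) \<partial>Mpos) = cmod (c n) * (\<integral>x. cmod (f (r n * x) * cnj (g x)) \<partial>Mpos)"
      by (simp add: F_def norm_mult mult.assoc)
    also have "(\<integral>x. cmod (f (r n * x) * cnj (g x)) \<partial>Mpos)
        \<le> (sqrt (r n) * (\<integral>x. (cmod (f (r n * x)))\<^sup>2 \<partial>Mpos) + (\<integral>x. (cmod (g x))\<^sup>2 \<partial>Mpos) / sqrt (r n)) / 2"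
      by (rule ip_integrable_bound(2)[OF fd g]) (use r in simp)
    also have "\<dots> = K / sqrt (r n)"
    proof -
      have "sqrt (r n) * sqrt (r n) = r n" using r[of n] by simp
      then show ?thesis unfolding L2pos_dil(2)[OF r f] K_def using r[of n] by (simp add: field_simps)
    qed
    finally show ?thesis by (simp add: mult_left_mono)
  qed
  have sumF: "summable (\<lambda>n. \<integral>x. norm (F n x) \<partial>Mpos)"
  proof (rule summable_comparison_test[of _ "\<lambda>n. cmod (c n) / sqrt (r n) * K"])
    show "\<exists>N. \<forall>n\<ge>N. norm (\<integral>x. norm (F n x) \<partial>Mpos) \<le> cmod (c n) / sqrt (r n) * K"
      using nF by (intro exI[of _ 0]) (auto simp: integral_nonneg_AE)
    show "summable (\<lambda>n. cmod (c n) / sqrt (r n) * K)" using W by (rule summable_mult2)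
  qed
  have sumG: "summable (\<lambda>n. \<integral>x. norm (G n x) \<partial>Mpos)" using sumF nFG by simp
  have aeF: "AE x in Mpos. summable (\<lambda>n. norm (F n x)) \<and> (\<Sum>n. F n x) = Gen c r f x * cnj (g x)"
    using Gen_L2(1)[OF r W f]
  proof eventually_elim
    case (elim x)
    have "summable (\<lambda>n. norm (F n x))"
      using summable_mult2[OF elim, of "cmod (g x)"] by (simp add: F_def norm_mult)
    moreover have "(\<Sum>n. F n x) = Gen c r f x * cnj (g x)"
      unfolding F_def Gen_def by (rule suminf_mult2[symmetric]) (rule summable_norm_cancel[OF elim])
    ultimately show ?case by simp
  qed
  have aeG: "AE y in Mpos. summable (\<lambda>n. norm (G n y)) \<and> (\<Sum>n. G n y) = f y * cnj (Gen c' r' g y)"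
    using Gen_L2(1)[OF r' W' g]
  proof eventually_elim
    case (elim y)
    have s: "summable (\<lambda>n. c' n * g (r' n * y))" by (rule summable_norm_cancel[OF elim])
    have sn: "summable (\<lambda>n. norm (G n y))"
      using summable_mult[OF elim, of "cmod (f y)"] by (simp add: G_def norm_mult)
    have sc: "(\<lambda>n. cnj (c' n) * cnj (g (r' n * y))) sums cnj (Gen c' r' g y)"
      unfolding Gen_def using sums_cnj[of "\<lambda>n. c' n * g (r' n * y)"] summable_sums[OF s] by simp
    have sG: "(\<lambda>n. G n y) sums (f y * cnj (Gen c' r' g y))"
      unfolding G_def by (rule sums_mult[OF sc])
    have "(\<Sum>n. G n y) = f y * cnj (Gen c' r' g y)" by (rule sums_unique[symmetric, OF sG])
    with sn show ?case by simp
  qed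
  have "IP (Gen c r f) g = (\<integral>x. (\<Sum>n. F n x) \<partial>Mpos)"
    unfolding IP_def using aeF by (intro integral_cong_AE) (auto simp: F_def elim!: AE_mp)
  also have "\<dots> = (\<Sum>n. integral\<^sup>L Mpos (F n))"
    by (rule integral_suminf[OF Fi]) (use aeF sumF in auto)
  also have "\<dots> = (\<Sum>n. integral\<^sup>L Mpos (G n))" using FG by simp
  also have "\<dots> = (\<integral>y. (\<Sum>n. G n y) \<partial>Mpos)"
    by (rule integral_suminf[symmetric, OF Gi]) (use aeG sumG in auto)
  also have "\<dots> = IP f (Gen c' r' g)"
    unfolding IP_def using aeG by (intro integral_cong_AE) (auto simp: G_def elim!: AE_mp)
  finally show ?thesis unfolding c'_def r'_def .
qed



lemma suminf_infsum_nat: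
  fixes f :: "nat \<Rightarrow> 'a::banach"
  assumes "summable (\<lambda>n. norm (f n))"
  shows "infsum f UNIV = suminf f"
  by (rule infsumI, rule norm_summable_imp_has_sum[OF assms])
     (rule summable_sums[OF summable_norm_cancel[OF assms]])

lemma abs_summable_nat:
  fixes f :: "nat \<Rightarrow> 'a::banach"
  assumes "summable (\<lambda>n. norm (f n))"
  shows "f abs_summable_on UNIV"
  using assms by (intro norm_summable_imp_summable_on) simp

lemma conv_sym: "dirichlet_conv a b k = dirichlet_conv b a k"
proof (cases "k = 0")
  case True then show ?thesis by (simp add: dirichlet_conv_def)
next
  case False
  have "dirichlet_conv a b k = (\<Sum>d | d dvd k. a (k div d) * b (k div (k div d)))"
    unfolding dirichlet_conv_def
    by (rule sum.reindex_bij_witness[of _ "\<lambda>d. k div d" "\<lambda>d. k div d"])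
       (use False in \<open>auto simp: div_div_eq_right dvd_div_eq_mult elim!: dvdE\<close>)
  also have "\<dots> = dirichlet_conv b a k"
    unfolding dirichlet_conv_def
    by (intro sum.cong refl) (use False in \<open>auto simp: mult.commute elim!: dvdE\<close>)
  finally show ?thesis .
qed

lemma fiber_sum:
  assumes k: "k > 0"
  shows "(\<Sum>p\<in>{p::nat\<times>nat. Suc (fst p) * Suc (snd p) = k}. \<alpha> (Suc (fst p)) * \<beta> (Suc (snd p))) = dirichlet_conv \<alpha> \<beta> k"
  unfolding dirichlet_conv_def
proof (rule sum.reindex_bij_witness[of _ "\<lambda>d. (d - 1, k div d - 1)" "\<lambda>p. Suc (fst p)"])
  fix p :: "nat \<times> nat" assume p: "p \<in> {p. Suc (fst p) * Suc (snd p) = k}"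
  then obtain a b where ab: "p = (a, b)" "Suc a * Suc b = k" by (cases p) auto
  have kd: "k div Suc a = Suc b" using ab(2) by (metis nonzero_mult_div_cancel_left nat.distinct(1))
  show "(Suc (fst p) - 1, k div Suc (fst p) - 1) = p" using ab kd by simp
  show "Suc (fst p) \<in> {d. d dvd k}" using ab(1) ab(2)[symmetric] by (simp del: mult_Suc mult_Suc_right)
  show "\<alpha> (Suc (fst p)) * \<beta> (k div Suc (fst p)) = \<alpha> (Suc (fst p)) * \<beta> (Suc (snd p))" using ab kd by simp
next
  fix d assume "d \<in> {d. d dvd k}"
  then obtain e where e: "k = d * e" by (auto elim: dvdE)
  with k have d0: "d > 0" "e > 0" by auto
  then show "Suc (fst (d - 1, k div d - 1)) = d" by simp
  have kd: "k div d = e" using e d0 by simp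
  have s1: "Suc (d - 1) = d" "Suc (e - 1) = e" using d0 by auto
  show "(d - 1, k div d - 1) \<in> {p. Suc (fst p) * Suc (snd p) = k}" unfolding mem_Collect_eq fst_conv snd_conv kd s1 using e by simp
qed

lemma fiber_finite: "finite {p::nat\<times>nat. Suc (fst p) * Suc (snd p) = k}"
proof -
  have "{p::nat\<times>nat. Suc (fst p) * Suc (snd p) = k} \<subseteq> {..k} \<times> {..k}"
  proof
    fix p assume "p \<in> {p::nat\<times>nat. Suc (fst p) * Suc (snd p) = k}"
    then obtain a b where p: "p = (a, b)" "Suc a * Suc b = k" by (cases p) auto
    then have "Suc a \<le> k" "Suc b \<le> k" by auto
    then show "p \<in> {..k} \<times> {..k}" using p by auto
  qed
  then show ?thesis by (rule finite_subset) auto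
qed

lemma dirichlet_group:
  fixes \<psi> :: "nat \<Rightarrow> complex"
  assumes inv: "conv_inverse \<alpha> \<beta>"
    and sm: "(\<lambda>p. \<psi> (Suc (fst p) * Suc (snd p)) * (\<alpha> (Suc (fst p)) * \<beta> (Suc (snd p)))) summable_on UNIV"
  shows "infsum (\<lambda>p. \<psi> (Suc (fst p) * Suc (snd p)) * (\<alpha> (Suc (fst p)) * \<beta> (Suc (snd p)))) UNIV = \<psi> 1"
proof -
  define \<Phi> where "\<Phi> = (\<lambda>p::nat\<times>nat. \<psi> (Suc (fst p) * Suc (snd p)) * (\<alpha> (Suc (fst p)) * \<beta> (Suc (snd p))))"
  define B where "B = (\<lambda>k. {p::nat\<times>nat. Suc (fst p) * Suc (snd p) = k})"
  have bij: "bij_betw snd (Sigma UNIV B) UNIV"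
    by (rule bij_betwI[of _ _ _ "\<lambda>p. (Suc (fst p) * Suc (snd p), p)"]) (auto simp: B_def)
  have "infsum \<Phi> UNIV = infsum (\<lambda>q. \<Phi> (snd q)) (Sigma UNIV B)"
    by (rule infsum_reindex_bij_betw[OF bij, symmetric])
  also have "\<dots> = infsum (\<lambda>k. infsum (\<lambda>p. \<Phi> (snd (k, p))) (B k)) UNIV"
  proof (rule infsum_Sigma_banach[symmetric])
    show "(\<lambda>q. \<Phi> (snd q)) summable_on Sigma UNIV B"
      using sm unfolding \<Phi>_def by (subst summable_on_reindex_bij_betw[OF bij])
  qed
  also have "\<dots> = infsum (\<lambda>k::nat. if k = 1 then \<psi> 1 else 0) UNIV"
  proof (rule Infinite_Sum.infsum_cong)
    fix k :: nat
    show "infsum (\<lambda>p. \<Phi> (snd (k, p))) (B k) = (if k = 1 then \<psi> 1 else 0)"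
    proof (cases "k = 0")
      case True
      then have "B k = {}" by (auto simp: B_def)
      then show ?thesis using True by simp
    next
      case False
      have "infsum (\<lambda>p. \<Phi> (snd (k, p))) (B k) = (\<Sum>p\<in>B k. \<psi> k * (\<alpha> (Suc (fst p)) * \<beta> (Suc (snd p))))"
        unfolding B_def using fiber_finite by (simp add: \<Phi>_def)
      also have "\<dots> = \<psi> k * (\<Sum>p\<in>B k. \<alpha> (Suc (fst p)) * \<beta> (Suc (snd p)))"
        by (rule sum_distrib_left[symmetric])
      also have "\<dots> = \<psi> k * dirichlet_conv \<alpha> \<beta> k"
        using False by (simp only: B_def fiber_sum)
      also have "\<dots> = (if k = 1 then \<psi> 1 else 0)"
        using inv False unfolding conv_inverse_def by auto
      finally show ?thesis .
    qed
  qed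
  also have "\<dots> = infsum (\<lambda>k::nat. if k = 1 then \<psi> 1 else 0) {1::nat}"
    by (rule infsum_cong_neutral) auto
  also have "\<dots> = \<psi> 1" by simp
  finally show ?thesis unfolding \<Phi>_def .
qed



lemma L2pos_cmod:
  assumes u: "u \<in> L2pos"
  shows "(\<lambda>y. complex_of_real (cmod (u y))) \<in> L2pos"
  using u by (auto simp: L2pos_def)

lemma Gen_double:
  assumes r: "\<And>n. r n > 0" and s: "\<And>n. s n > 0"
    and Wc: "summable (\<lambda>n. cmod (c n) / sqrt (r n))"
    and Wd: "summable (\<lambda>n. cmod (d n) / sqrt (s n))"
    and u: "u \<in> L2pos"
  shows "AE x in Mpos. (((\<lambda>p. norm (c (fst p) * d (snd p) * u (s (snd p) * (r (fst p) * x)))) summable_on UNIV)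
     \<and> Gen c r (Gen d s u) x = infsum (\<lambda>p. c (fst p) * d (snd p) * u (s (snd p) * (r (fst p) * x))) UNIV)"
proof -
  define v where "v = (\<lambda>y. complex_of_real (cmod (u y)))"
  define dd where "dd = (\<lambda>n. complex_of_real (cmod (d n)))"
  define V where "V = Gen dd s v"
  have v: "v \<in> L2pos" unfolding v_def by (rule L2pos_cmod[OF u])
  have Wdd: "summable (\<lambda>n. cmod (dd n) / sqrt (s n))" using Wd by (simp add: dd_def)
  have V: "V \<in> L2pos" unfolding V_def by (rule Gen_L2(2)[OF s Wdd v])
  have A2: "AE x in Mpos. \<forall>m. summable (\<lambda>n. cmod (d n * u (s n * (r m * x))))"
    by (subst AE_all_countable) (intro allI AE_dil[OF r] Gen_L2(1)[OF s Wd u])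
  have A3: "AE x in Mpos. summable (\<lambda>m. cmod (c m * V (r m * x)))"
    by (rule Gen_L2(1)[OF r Wc V])
  show ?thesis using A2 A3
  proof eventually_elim
    case (elim x)
    define \<Phi> where "\<Phi> = (\<lambda>p. c (fst p) * d (snd p) * u (s (snd p) * (r (fst p) * x)))"
    define \<rho> where "\<rho> = (\<lambda>m. \<Sum>n. cmod (d n * u (s n * (r m * x))))"
    have \<rho>0: "\<rho> m \<ge> 0" for m unfolding \<rho>_def by (rule suminf_nonneg[OF elim(1)[rule_format]]) simp
    have Vr: "V (r m * x) = complex_of_real (\<rho> m)" for m
    proof -
      have "V (r m * x) = (\<Sum>n. complex_of_real (cmod (d n * u (s n * (r m * x)))))"
        unfolding V_def Gen_def dd_def v_def by (simp add: norm_mult)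
      also have "\<dots> = complex_of_real (\<rho> m)"
        unfolding \<rho>_def by (rule suminf_of_real[symmetric, OF elim(1)[rule_format]])
      finally show ?thesis .
    qed
    have nPhi: "norm (\<Phi> (m, n)) = cmod (c m) * cmod (d n * u (s n * (r m * x)))" for m n
      by (simp add: \<Phi>_def norm_mult)
    have row: "summable (\<lambda>n. norm (\<Phi> (m, n)))" for m
      unfolding nPhi by (rule summable_mult[OF elim(1)[rule_format]])
    have rowsum: "infsum (\<lambda>n. norm (\<Phi> (m, n))) UNIV = cmod (c m) * \<rho> m" for m
    proof -
      have "infsum (\<lambda>n. norm (\<Phi> (m, n))) UNIV = (\<Sum>n. norm (\<Phi> (m, n)))"
        by (rule suminf_infsum_nat) (use row[of m] in simp)
      also have "\<dots> = cmod (c m) * \<rho> m" unfolding nPhi \<rho>_def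
        by (rule suminf_mult[OF elim(1)[rule_format]])
      finally show ?thesis .
    qed
    have col: "summable (\<lambda>m. cmod (c m) * \<rho> m)"
      using elim(2) by (simp add: Vr norm_mult \<rho>0)
    have abs: "(\<lambda>p. norm (\<Phi> p)) summable_on UNIV"
    proof -
      have "(\<lambda>p. norm (\<Phi> p)) summable_on Sigma UNIV (\<lambda>_. UNIV)"
      proof (subst Infinite_Sum.abs_summable_on_Sigma_iff, intro conjI ballI)
        show "(\<lambda>n. norm (\<Phi> (m, n))) summable_on UNIV" for m by (rule abs_summable_nat[OF row])
        show "(\<lambda>m. norm (infsum (\<lambda>n. norm (\<Phi> (m, n))) UNIV)) summable_on UNIV"
          unfolding rowsum by (rule abs_summable_nat) (use col \<rho>0 in simp)
      qed
      then show ?thesis by simp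
    qed
    have inner: "Gen d s u (r m * x) = infsum (\<lambda>n. d n * u (s n * (r m * x))) UNIV" for m
      unfolding Gen_def by (rule suminf_infsum_nat[symmetric, OF elim(1)[rule_format]])
    have "Gen c r (Gen d s u) x = (\<Sum>m. c m * Gen d s u (r m * x))" by (simp add: Gen_def)
    also have "\<dots> = infsum (\<lambda>m. c m * Gen d s u (r m * x)) UNIV"
    proof (rule suminf_infsum_nat[symmetric])
      show "summable (\<lambda>m. norm (c m * Gen d s u (r m * x)))"
      proof (rule summable_comparison_test[OF _ col])
        show "\<exists>N. \<forall>m\<ge>N. norm (norm (c m * Gen d s u (r m * x))) \<le> cmod (c m) * \<rho> m"
        proof (intro exI[of _ 0] allI impI)
          fix m
          have "cmod (Gen d s u (r m * x)) \<le> \<rho> m"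
            unfolding Gen_def \<rho>_def by (rule summable_norm[OF elim(1)[rule_format]])
          then show "norm (norm (c m * Gen d s u (r m * x))) \<le> cmod (c m) * \<rho> m"
            by (simp add: norm_mult mult_left_mono)
        qed
      qed
    qed
    also have "\<dots> = infsum (\<lambda>m. infsum (\<lambda>n. \<Phi> (m, n)) UNIV) UNIV"
    proof (rule Infinite_Sum.infsum_cong)
      fix m
      have "c m * infsum (\<lambda>n. d n * u (s n * (r m * x))) UNIV = infsum (\<lambda>n. c m * (d n * u (s n * (r m * x)))) UNIV"
        by (rule infsum_cmult_right'[symmetric])
      then show "c m * Gen d s u (r m * x) = infsum (\<lambda>n. \<Phi> (m, n)) UNIV"
        unfolding inner \<Phi>_def by (simp add: mult.assoc)
    qed
    also have "\<dots> = infsum \<Phi> (Sigma UNIV (\<lambda>_. UNIV))"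
      by (rule infsum_Sigma_banach) (use abs abs_summable_summable in simp)
    finally show ?case using abs unfolding \<Phi>_def by simp
  qed
qed



definition cT :: "(nat \<Rightarrow> complex) \<Rightarrow> nat \<Rightarrow> complex" where "cT \<alpha> = (\<lambda>n. \<alpha> (Suc n))"
definition rT :: "nat \<Rightarrow> real" where "rT = (\<lambda>n. real (Suc n))"
definition cS :: "(nat \<Rightarrow> complex) \<Rightarrow> nat \<Rightarrow> complex" where "cS \<alpha> = (\<lambda>n. cnj (cT \<alpha> n) / complex_of_real (rT n))"
definition rS :: "nat \<Rightarrow> real" where "rS = (\<lambda>n. 1 / rT n)"

lemma rT_pos: "rT n > 0" by (simp add: rT_def)
lemma rS_pos: "rS n > 0" by (simp add: rS_def rT_def)

lemma WS:
  assumes "summable (\<lambda>n. cmod (cT \<alpha> n) / sqrt (rT n))"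
  shows "summable (\<lambda>n. cmod (cS \<alpha> n) / sqrt (rS n))"
  unfolding cS_def rS_def by (rule W_adj[OF rT_pos assms])

lemma cS_adj: "(\<lambda>n. cnj (cS \<alpha> n) / complex_of_real (rS n)) = cT \<alpha>"
proof (rule ext)
  fix n
  have nz: "complex_of_real (rT n) \<noteq> 0" using rT_pos[of n] by simp
  show "cnj (cS \<alpha> n) / complex_of_real (rS n) = cT \<alpha> n"
    using nz by (simp add: cS_def rS_def)
qed

lemma rS_adj: "(\<lambda>n. 1 / rS n) = rT"
  by (auto simp: rS_def rT_def fun_eq_iff)

lemma conv_inverse_sym: "conv_inverse a b \<Longrightarrow> conv_inverse b a"
  unfolding conv_inverse_def using conv_sym by metis

lemma conv_inverse_cnj:
  assumes "conv_inverse a b"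
  shows "conv_inverse (\<lambda>n. cnj (a n)) (\<lambda>n. cnj (b n))"
proof -
  have "dirichlet_conv (\<lambda>n. cnj (a n)) (\<lambda>n. cnj (b n)) k = cnj (dirichlet_conv a b k)" for k
    by (simp add: dirichlet_conv_def)
  then show ?thesis using assms by (simp add: conv_inverse_def)
qed




lemma DIR1:
  assumes inv: "conv_inverse \<alpha> \<beta>"
    and Wa: "summable (\<lambda>n. cmod (cT \<alpha> n) / sqrt (rT n))"
    and Wb: "summable (\<lambda>n. cmod (cT \<beta> n) / sqrt (rT n))"
    and u: "u \<in> L2pos"
  shows "AE x in Mpos. Gen (cT \<alpha>) rT (Gen (cT \<beta>) rT u) x = u x"
  using Gen_double[OF rT_pos rT_pos Wa Wb u]
proof eventually_elim
  case (elim x)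
  define \<psi> where "\<psi> = (\<lambda>k::nat. u (real k * x))"
  have eq: "(\<lambda>p. cT \<alpha> (fst p) * cT \<beta> (snd p) * u (rT (snd p) * (rT (fst p) * x)))
          = (\<lambda>p. \<psi> (Suc (fst p) * Suc (snd p)) * (\<alpha> (Suc (fst p)) * \<beta> (Suc (snd p))))"
  proof (rule ext)
    fix p :: "nat \<times> nat"
    have "rT (snd p) * (rT (fst p) * x) = real (Suc (fst p) * Suc (snd p)) * x"
      by (simp only: rT_def of_nat_mult mult_ac)
    then have e: "u (rT (snd p) * (rT (fst p) * x)) = \<psi> (Suc (fst p) * Suc (snd p))"
      by (simp only: \<psi>_def)
    show "cT \<alpha> (fst p) * cT \<beta> (snd p) * u (rT (snd p) * (rT (fst p) * x))
          = \<psi> (Suc (fst p) * Suc (snd p)) * (\<alpha> (Suc (fst p)) * \<beta> (Suc (snd p)))"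
      unfolding e by (simp only: cT_def mult_ac)
  qed
  have sm0: "(\<lambda>p. cT \<alpha> (fst p) * cT \<beta> (snd p) * u (rT (snd p) * (rT (fst p) * x))) summable_on UNIV"
    using elim by (rule Infinite_Sum.abs_summable_summable[OF conjunct1])
  have sm: "(\<lambda>p. \<psi> (Suc (fst p) * Suc (snd p)) * (\<alpha> (Suc (fst p)) * \<beta> (Suc (snd p)))) summable_on UNIV"
    using sm0 unfolding eq .
  have "Gen (cT \<alpha>) rT (Gen (cT \<beta>) rT u) x = \<psi> 1"
    using elim dirichlet_group[OF inv sm] unfolding eq by simp
  then show ?case by (simp add: \<psi>_def)
qed


lemma DIR2:
  assumes inv: "conv_inverse \<alpha> \<beta>"
    and Wa: "summable (\<lambda>n. cmod (cT \<alpha> n) / sqrt (rT n))"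
    and Wb: "summable (\<lambda>n. cmod (cT \<beta> n) / sqrt (rT n))"
    and u: "u \<in> L2pos"
  shows "AE x in Mpos. Gen (cS \<alpha>) rS (Gen (cS \<beta>) rS u) x = u x"
  using Gen_double[OF rS_pos rS_pos WS[OF Wa] WS[OF Wb] u]
proof eventually_elim
  case (elim x)
  define \<psi> where "\<psi> = (\<lambda>k::nat. u (x / real k) / complex_of_real (real k))"
  have eq: "(\<lambda>p. cS \<alpha> (fst p) * cS \<beta> (snd p) * u (rS (snd p) * (rS (fst p) * x)))
          = (\<lambda>p. \<psi> (Suc (fst p) * Suc (snd p)) * (cnj (\<alpha> (Suc (fst p))) * cnj (\<beta> (Suc (snd p)))))"
  proof (rule ext)
    fix p :: "nat \<times> nat"
    have "rS (snd p) * (rS (fst p) * x) = x / real (Suc (fst p) * Suc (snd p))"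
      by (simp add: rS_def rT_def algebra_simps)
    then have e1: "u (rS (snd p) * (rS (fst p) * x)) = u (x / real (Suc (fst p) * Suc (snd p)))"
      by (simp only:)
    have e2: "cS \<alpha> (fst p) * cS \<beta> (snd p) = (cnj (\<alpha> (Suc (fst p))) * cnj (\<beta> (Suc (snd p)))) / complex_of_real (real (Suc (fst p) * Suc (snd p)))"
      by (simp add: cS_def cT_def rT_def algebra_simps)
    show "cS \<alpha> (fst p) * cS \<beta> (snd p) * u (rS (snd p) * (rS (fst p) * x))
          = \<psi> (Suc (fst p) * Suc (snd p)) * (cnj (\<alpha> (Suc (fst p))) * cnj (\<beta> (Suc (snd p))))"
      unfolding e1 e2 \<psi>_def by (simp only: divide_inverse mult_ac)
  qed
  have sm0: "(\<lambda>p. cS \<alpha> (fst p) * cS \<beta> (snd p) * u (rS (snd p) * (rS (fst p) * x))) summable_on UNIV"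
    using elim by (rule Infinite_Sum.abs_summable_summable[OF conjunct1])
  have sm: "(\<lambda>p. \<psi> (Suc (fst p) * Suc (snd p)) * (cnj (\<alpha> (Suc (fst p))) * cnj (\<beta> (Suc (snd p))))) summable_on UNIV"
    using sm0 unfolding eq .
  have "Gen (cS \<alpha>) rS (Gen (cS \<beta>) rS u) x = \<psi> 1"
    using elim dirichlet_group[OF conv_inverse_cnj[OF inv] sm] unfolding eq by simp
  then show ?case by (simp add: \<psi>_def)
qed

lemma COMM:
  assumes Wb: "summable (\<lambda>n. cmod (cT \<beta> n) / sqrt (rT n))"
    and u: "u \<in> L2pos"
  shows "AE x in Mpos. Gen (cT \<beta>) rT (Gen (cS \<beta>) rS u) x = Gen (cS \<beta>) rS (Gen (cT \<beta>) rT u) x"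
  using Gen_double[OF rT_pos rS_pos Wb WS[OF Wb] u] Gen_double[OF rS_pos rT_pos WS[OF Wb] Wb u]
proof eventually_elim
  case (elim x)
  define \<Phi> where "\<Phi> = (\<lambda>p. cT \<beta> (fst p) * cS \<beta> (snd p) * u (rS (snd p) * (rT (fst p) * x)))"
  have "infsum (\<lambda>p. cS \<beta> (fst p) * cT \<beta> (snd p) * u (rT (snd p) * (rS (fst p) * x))) UNIV
      = infsum (\<lambda>p. \<Phi> (prod.swap p)) UNIV"
  proof (rule Infinite_Sum.infsum_cong)
    fix p :: "nat \<times> nat"
    have "rT (snd p) * (rS (fst p) * x) = rS (fst p) * (rT (snd p) * x)" by (simp only: mult_ac)
    then show "cS \<beta> (fst p) * cT \<beta> (snd p) * u (rT (snd p) * (rS (fst p) * x)) = \<Phi> (prod.swap p)"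
      unfolding \<Phi>_def by (simp only: fst_swap snd_swap mult_ac)
  qed
  also have "\<dots> = infsum \<Phi> UNIV"
    by (rule infsum_reindex_bij_betw) (auto simp: bij_betw_def)
  finally show ?case using elim unfolding \<Phi>_def by simp
qed



lemma Tmult_Gen: "Tmult \<alpha> f = Gen (cT \<alpha>) rT f"
  by (auto simp: fun_eq_iff Tmult_def Gen_def cT_def rT_def)

lemma Fop_Gen: "Fop a b f = Gen (cT (\<lambda>n. cnj (b n))) rT (Sop (Gen (cT a) rT f))"
  by (simp add: Fop_def Tmult_Gen)

lemma SF:
  assumes Wa: "summable (\<lambda>n. cmod (cT a n) / sqrt (rT n))"
    and Wb: "summable (\<lambda>n. cmod (cT b n) / sqrt (rT n))"
    and f: "f \<in> L2pos"
  shows "AE x in Mpos. Sop (Fop a b f) x = Gen (cS b) rS (Gen (cT a) rT f) x"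
proof -
  have Af: "Gen (cT a) rT f \<in> L2pos" by (rule Gen_L2(2)[OF rT_pos Wa f])
  have pos: "AE x in Mpos. x > 0" by (rule AE_I2) simp
  show ?thesis
    using Gen_L2(1)[OF rS_pos WS[OF Wb] Af] pos
  proof eventually_elim
    case (elim x)
    let ?A = "Gen (cT a) rT f"
    have x: "x > 0" using elim(2) .
    have s: "summable (\<lambda>n. cS b n * ?A (rS n * x))" by (rule summable_norm_cancel[OF elim(1)])
    have t: "cT (\<lambda>n. cnj (b n)) n * Sop ?A (rT n * (1 / x)) = complex_of_real x * (cS b n * ?A (rS n * x))" for n
    proof -
      have nz1: "complex_of_real x \<noteq> 0" using x by auto
      have nz2: "complex_of_real (real (Suc n)) \<noteq> 0"
        unfolding of_real_of_nat_eq by (rule of_nat_neq_0)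
      note nz = nz1 nz2
      have arg: "1 / (rT n * (1 / x)) = rS n * x" using x by (simp add: rT_def rS_def)
      have "Sop ?A (rT n * (1 / x)) = ?A (rS n * x) / complex_of_real (rT n * (1 / x))"
        by (simp only: Sop_def arg)
      then show ?thesis using nz by (simp add: cS_def cT_def rT_def field_simps)
    qed
    have "Sop (Fop a b f) x = (\<Sum>n. cT (\<lambda>n. cnj (b n)) n * Sop ?A (rT n * (1 / x))) / complex_of_real x"
      by (simp add: Sop_def Fop_Gen Gen_def)
    also have "\<dots> = (\<Sum>n. complex_of_real x * (cS b n * ?A (rS n * x))) / complex_of_real x"
      by (simp only: t)
    also have "\<dots> = complex_of_real x * Gen (cS b) rS ?A x / complex_of_real x"
      unfolding suminf_mult[OF s] Gen_def[of "cS b" rS] ..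
    also have "\<dots> = Gen (cS b) rS ?A x" using x by simp
    finally show ?case .
  qed
qed

lemma L2norm_nonneg: "L2norm f \<ge> 0"
  unfolding L2norm_def by (simp add: integral_nonneg_AE)

lemma NI:
  assumes inv: "conv_inverse a b"
    and Wa: "summable (\<lambda>n. cmod (cT a n) / sqrt (rT n))"
    and Wb: "summable (\<lambda>n. cmod (cT b n) / sqrt (rT n))"
    and f: "f \<in> L2pos"
  shows "L2norm (Gen (cS b) rS (Gen (cT a) rT f)) = L2norm f"
proof -
  define u where "u = Gen (cT a) rT f"
  define v where "v = Gen (cS b) rS u"
  have u: "u \<in> L2pos" unfolding u_def by (rule Gen_L2(2)[OF rT_pos Wa f])
  have v: "v \<in> L2pos" unfolding v_def by (rule Gen_L2(2)[OF rS_pos WS[OF Wb] u])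
  have um: "u \<in> borel_measurable Mpos" and vm: "v \<in> borel_measurable Mpos" and fm: "f \<in> borel_measurable Mpos"
    using u v f by (auto simp: L2pos_def)
  have Bvm: "Gen (cT b) rT v \<in> borel_measurable Mpos" by (rule Gen_meas[OF rT_pos vm])
  have Bsfm: "Gen (cS b) rS f \<in> borel_measurable Mpos" by (rule Gen_meas[OF rS_pos fm])
  have Bum: "Gen (cT b) rT u \<in> borel_measurable Mpos" by (rule Gen_meas[OF rT_pos um])
  have adj1: "IP v v = IP u (Gen (cT b) rT v)"
    using Gen_adj[OF rS_pos WS[OF Wb] u v] unfolding v_def cS_adj rS_adj .
  have Bu: "AE x in Mpos. Gen (cT b) rT u x = f x"
    unfolding u_def by (rule DIR1[OF conv_inverse_sym[OF inv] Wb Wa f])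
  have Bv: "AE x in Mpos. Gen (cT b) rT v x = Gen (cS b) rS f x"
    using COMM[OF Wb u] Gen_AE_cong[OF rS_pos Bu, of "cS b"] unfolding v_def
    by eventually_elim simp
  have "IP u (Gen (cT b) rT v) = IP u (Gen (cS b) rS f)"
    by (rule ip_AE_cong[OF um Bvm um Bsfm AE_I2[OF refl] Bv])
  also have "\<dots> = IP (Gen (cT b) rT u) f"
    using Gen_adj[OF rT_pos Wb u f] unfolding cS_def[symmetric] rS_def[symmetric] ..
  also have "\<dots> = IP f f"
    by (rule ip_AE_cong[OF Bum fm fm fm Bu AE_I2[OF refl]])
  finally have "complex_of_real ((L2norm v)\<^sup>2) = complex_of_real ((L2norm f)\<^sup>2)"
    using adj1 ip_self[OF v] ip_self[OF f] by simp
  then have "(L2norm v)\<^sup>2 = (L2norm f)\<^sup>2" by (simp only: of_real_eq_iff)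
  then show ?thesis unfolding v_def u_def
    using L2norm_nonneg by (metis power2_eq_iff_nonneg)
qed



lemma Sop_lin: "Sop (\<lambda>y. u y + c * v y) x = Sop u x + c * Sop v x"
  by (simp add: Sop_def add_divide_distrib)

theorem theorem3:
  fixes a b :: "nat \<Rightarrow> complex"
  assumes a1: "a 1 \<noteq> 0"
    and asum: "\<exists>\<epsilon>>0. summable (\<lambda>n. cmod (a (Suc n)) * real (Suc n) powr \<epsilon>)"
    and binv: "conv_inverse a b"
    and bsum: "summable (\<lambda>n. cmod (b (Suc n)) / sqrt (real (Suc n)))"
  shows "unitary_L2 (Fop a b)"
proof -
  obtain \<epsilon> where \<epsilon>: "\<epsilon> > 0" "summable (\<lambda>n. cmod (a (Suc n)) * real (Suc n) powr \<epsilon>)"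
    using asum by blast
  have Wa: "summable (\<lambda>n. cmod (cT a n) / sqrt (rT n))"
  proof (rule summable_comparison_test[OF _ \<epsilon>(2)])
    show "\<exists>N. \<forall>n\<ge>N. norm (cmod (cT a n) / sqrt (rT n)) \<le> cmod (a (Suc n)) * real (Suc n) powr \<epsilon>"
    proof (intro exI[of _ 0] allI impI)
      fix n :: nat
      have "1 / sqrt (real (Suc n)) \<le> 1" by simp
      also have "1 \<le> real (Suc n) powr \<epsilon>" using \<epsilon>(1) by (intro ge_one_powr_ge_zero) auto
      finally have "1 / sqrt (real (Suc n)) \<le> real (Suc n) powr \<epsilon>" .
      then have "cmod (a (Suc n)) * (1 / sqrt (real (Suc n))) \<le> cmod (a (Suc n)) * real (Suc n) powr \<epsilon>"
        by (rule mult_left_mono) simp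
      then show "norm (cmod (cT a n) / sqrt (rT n)) \<le> cmod (a (Suc n)) * real (Suc n) powr \<epsilon>"
        by (simp add: cT_def rT_def)
    qed
  qed
  have Wb: "summable (\<lambda>n. cmod (cT b n) / sqrt (rT n))" using bsum by (simp add: cT_def rT_def)
  have Wbc: "summable (\<lambda>n. cmod (cT (\<lambda>n. cnj (b n)) n) / sqrt (rT n))" using bsum by (simp add: cT_def rT_def)
  have inv2: "conv_inverse b a" by (rule conv_inverse_sym[OF binv])
  show ?thesis unfolding unitary_L2_def
  proof (intro conjI ballI impI allI)
    fix f g assume f: "f \<in> L2pos" and g: "g \<in> L2pos" and fg: "AE x in Mpos. f x = g x"
    have "AE x in Mpos. Gen (cT a) rT f x = Gen (cT a) rT g x" by (rule Gen_AE_cong[OF rT_pos fg])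
    then have "AE x in Mpos. Sop (Gen (cT a) rT f) x = Sop (Gen (cT a) rT g) x" by (rule AE_Sop_cong)
    then show "AE x in Mpos. Fop a b f x = Fop a b g x"
      unfolding Fop_Gen by (rule Gen_AE_cong[OF rT_pos])
  next
    fix f assume f: "f \<in> L2pos"
    have Af: "Gen (cT a) rT f \<in> L2pos" by (rule Gen_L2(2)[OF rT_pos Wa f])
    have BsAf: "Gen (cS b) rS (Gen (cT a) rT f) \<in> L2pos" by (rule Gen_L2(2)[OF rS_pos WS[OF Wb] Af])
    have Fm: "Fop a b f \<in> borel_measurable Mpos"
      unfolding Fop_Gen by (intro Gen_meas rT_pos Sop_meas L2posD(1)[OF Af])
    have SFm: "Sop (Fop a b f) \<in> borel_measurable Mpos" by (rule Sop_meas[OF Fm])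
    have sf: "AE x in Mpos. Gen (cS b) rS (Gen (cT a) rT f) x = Sop (Fop a b f) x"
      using SF[OF Wa Wb f] by eventually_elim simp
    have SF2: "Sop (Fop a b f) \<in> L2pos" "L2norm (Sop (Fop a b f)) = L2norm (Gen (cS b) rS (Gen (cT a) rT f))"
      using L2pos_AE[OF BsAf SFm sf] by auto
    have SSF: "Sop (Sop (Fop a b f)) \<in> L2pos" "L2norm (Sop (Sop (Fop a b f))) = L2norm (Sop (Fop a b f))"
      using Sop_L2[OF SF2(1)] by auto
    have ss: "AE x in Mpos. Sop (Sop (Fop a b f)) x = Fop a b f x"
      by (rule AE_I2) (simp add: Sop_Sop)
    have F: "Fop a b f \<in> L2pos" "L2norm (Fop a b f) = L2norm (Sop (Sop (Fop a b f)))"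
      using L2pos_AE[OF SSF(1) Fm ss] by auto
    show "Fop a b f \<in> L2pos" by (rule F(1))
    show "L2norm (Fop a b f) = L2norm f"
      using F(2) SSF(2) SF2(2) NI[OF binv Wa Wb f] by simp
  next
    fix f g c assume f: "f \<in> L2pos" and g: "g \<in> L2pos"
    have Af: "Gen (cT a) rT f \<in> L2pos" by (rule Gen_L2(2)[OF rT_pos Wa f])
    have Ag: "Gen (cT a) rT g \<in> L2pos" by (rule Gen_L2(2)[OF rT_pos Wa g])
    have SAf: "Sop (Gen (cT a) rT f) \<in> L2pos" by (rule Sop_L2(1)[OF Af])
    have SAg: "Sop (Gen (cT a) rT g) \<in> L2pos" by (rule Sop_L2(1)[OF Ag])
    have "AE x in Mpos. Gen (cT a) rT (\<lambda>y. f y + c * g y) x = Gen (cT a) rT f x + c * Gen (cT a) rT g x"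
      by (rule Gen_lin[OF rT_pos Wa f g])
    then have "AE x in Mpos. Sop (Gen (cT a) rT (\<lambda>y. f y + c * g y)) x
         = Sop (\<lambda>y. Gen (cT a) rT f y + c * Gen (cT a) rT g y) x"
      by (rule AE_Sop_cong)
    then have "AE x in Mpos. Sop (Gen (cT a) rT (\<lambda>y. f y + c * g y)) x
         = Sop (Gen (cT a) rT f) x + c * Sop (Gen (cT a) rT g) x"
      by (simp add: Sop_lin)
    then have "AE x in Mpos. Gen (cT (\<lambda>n. cnj (b n))) rT (Sop (Gen (cT a) rT (\<lambda>y. f y + c * g y))) x
        = Gen (cT (\<lambda>n. cnj (b n))) rT (\<lambda>y. Sop (Gen (cT a) rT f) y + c * Sop (Gen (cT a) rT g) y) x"
      by (rule Gen_AE_cong[OF rT_pos])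
    moreover have "AE x in Mpos. Gen (cT (\<lambda>n. cnj (b n))) rT (\<lambda>y. Sop (Gen (cT a) rT f) y + c * Sop (Gen (cT a) rT g) y) x
        = Gen (cT (\<lambda>n. cnj (b n))) rT (Sop (Gen (cT a) rT f)) x + c * Gen (cT (\<lambda>n. cnj (b n))) rT (Sop (Gen (cT a) rT g)) x"
      by (rule Gen_lin[OF rT_pos Wbc SAf SAg])
    ultimately show "AE x in Mpos. Fop a b (\<lambda>y. f y + c * g y) x = Fop a b f x + c * Fop a b g x"
      unfolding Fop_Gen by eventually_elim simp
  next
    fix g assume g: "g \<in> L2pos"
    define h where "h = Sop g"
    have h: "h \<in> L2pos" unfolding h_def by (rule Sop_L2(1)[OF g])
    define w where "w = Gen (cS a) rS h"
    have w: "w \<in> L2pos" unfolding w_def by (rule Gen_L2(2)[OF rS_pos WS[OF Wa] h])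
    define f where "f = Gen (cT b) rT w"
    have f: "f \<in> L2pos" unfolding f_def by (rule Gen_L2(2)[OF rT_pos Wb w])
    have ABw: "AE x in Mpos. Gen (cT a) rT (Gen (cT b) rT w) x = w x"
      by (rule DIR1[OF binv Wa Wb w])
    have e1: "AE x in Mpos. Gen (cS b) rS (Gen (cT a) rT f) x = Gen (cS b) rS w x"
      unfolding f_def by (rule Gen_AE_cong[OF rS_pos ABw])
    have e2: "AE x in Mpos. Gen (cS b) rS w x = h x"
      unfolding w_def by (rule DIR2[OF inv2 Wb Wa h])
    have "AE x in Mpos. Sop (Fop a b f) x = Sop g x"
      using SF[OF Wa Wb f] e1 e2 unfolding h_def by eventually_elim simp
    then have "AE x in Mpos. Sop (Sop (Fop a b f)) x = Sop (Sop g) x" by (rule AE_Sop_cong)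
    then have "AE x in Mpos. Fop a b f x = g x"
      by (rule AE_mp) (intro AE_I2, simp add: Sop_Sop)
    then show "\<exists>f\<in>L2pos. AE x in Mpos. Fop a b f x = g x" using f by blast
  qed
qed


end
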